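(* Let $\ell$ be an odd prime, $N\ge1$, $\zeta=e^{2\pi i/\ell^N}$. Then $$\frac{1}{\ell^N}\mathrm{Tr}_{\mathbb{Q}_\ell(\zeta)/\mathbb{Q}_\ell}\Big((1-\zeta)^{\ell^{N-1}(\ell N-N+1)-1}\Big)\equiv(-\ell)^{N-1}\pmod{\ell^N}.$$ *)

theory Defs
  imports "HOL-Number_Theory.Number_Theory" "HOL-Analysis.Analysis"
begin

definition zeta :: "nat \<Rightarrow> complex" where
  "zeta n = exp (2 * of_real pi * \<i> / of_nat n)"

text \<open>Trace from Q_l(zeta) to Q_l of an element given as an integer-coefficient
 expression f(zeta), n = l^N: since the cyclotomic polynomial Phi_n is irreducible
 over Q_l, the embeddings of Q_l(zeta) over Q_l send zeta to zeta^k, k a unit mod n,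
 so the trace is the sum of the Galois conjugates f(zeta^k).\<close>
definition cyclo_trace :: "nat \<Rightarrow> (complex \<Rightarrow> complex) \<Rightarrow> complex" where
  "cyclo_trace n f = (\<Sum>k\<in>{k. 1 \<le> k \<and> k \<le> n \<and> coprime k n}. f (zeta n ^ k))"

end

theory Submission
  imports Defs "HOL-Computational_Algebra.Polynomial"
begin


definition intp :: "complex poly \<Rightarrow> bool" where
  "intp p \<longleftrightarrow> (\<forall>i. coeff p i \<in> \<int>)"

lemma intp_0 [simp]: "intp 0" by (simp add: intp_def)
lemma intp_1 [simp]: "intp 1" by (simp add: intp_def coeff_1)
lemma intp_add [intro]: "intp p \<Longrightarrow> intp q \<Longrightarrow> intp (p + q)"
  by (simp add: intp_def)
lemma intp_diff [intro]: "intp p \<Longrightarrow> intp q \<Longrightarrow> intp (p - q)"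
  by (simp add: intp_def)
lemma intp_uminus [intro]: "intp p \<Longrightarrow> intp (- p)"
  by (simp add: intp_def)
lemma intp_mult [intro]: "intp p \<Longrightarrow> intp q \<Longrightarrow> intp (p * q)"
  unfolding intp_def coeff_mult by (auto intro!: Ints_sum Ints_mult)
lemma intp_power [intro]: "intp p \<Longrightarrow> intp (p ^ k)"
  by (induction k) auto
lemma intp_monom [intro]: "c \<in> \<int> \<Longrightarrow> intp (monom c k)"
  by (simp add: intp_def coeff_monom)
lemma intp_smult [intro]: "c \<in> \<int> \<Longrightarrow> intp p \<Longrightarrow> intp (smult c p)"
  by (simp add: intp_def)
lemma intp_sum [intro]: "(\<And>i. i \<in> A \<Longrightarrow> intp (f i)) \<Longrightarrow> intp (sum f A)"
  by (induction A rule: infinite_finite_induct) auto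
lemma intp_const [intro]: "c \<in> \<int> \<Longrightarrow> intp [:c:]"
  by (simp add: intp_def coeff_pCons split: nat.split)
lemma intp_pCons: "intp (pCons a p) \<longleftrightarrow> a \<in> \<int> \<and> intp p"
  apply (simp add: intp_def coeff_pCons split: nat.split)
  by (metis coeff_pCons_0 coeff_pCons_Suc)

lemma zeta_pow: "zeta d ^ j = exp (2 * of_real pi * \<i> * of_nat j / of_nat d)"
  unfolding zeta_def exp_of_nat_mult[symmetric] by (simp add: field_simps)

lemma zeta_pow_eq_1: "d \<ge> 1 \<Longrightarrow> zeta d ^ j = 1 \<longleftrightarrow> d dvd j"
  unfolding zeta_pow by (rule complex_root_unity_eq_1)

lemma zeta_mult_pow: assumes "l > 0" shows "zeta (l * m) ^ l = zeta m"
proof -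
  have "zeta (l * m) ^ l = exp (of_nat l * (2 * of_real pi * \<i> / of_nat (l * m)))"
    unfolding zeta_def exp_of_nat_mult by simp
  also have "of_nat l * (2 * of_real pi * \<i> / of_nat (l * m)) = 2 * of_real pi * \<i> / (of_nat m :: complex)"
  proof (cases "m = 0")
    case False
    then show ?thesis using assms by (simp add: divide_simps)
  qed simp
  finally show ?thesis unfolding zeta_def .
qed

lemma root_sum:
  assumes "d \<ge> 1"
  shows "(\<Sum>t\<in>{1..d}. (zeta d ^ j) ^ t) = (if d dvd j then of_nat d else 0)"
proof (cases "d dvd j")
  case True
  then have "zeta d ^ j = 1" using assms zeta_pow_eq_1 by simp
  then show ?thesis using True assms by simp
next
  case False
  define w where "w = zeta d ^ j"
  have w1: "w \<noteq> 1" using False assms zeta_pow_eq_1 w_def by auto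
  have wd: "w ^ d = 1" unfolding w_def
    by (metis assms dvd_refl power_mult power_mult_distrib power_one mult.commute zeta_pow_eq_1 power_commutes power_mult[symmetric])
  have "(\<Sum>t\<in>{1..d}. w ^ t) = (\<Sum>t<d. w ^ t) * w"
  proof -
    have "(\<Sum>t\<in>{1..d}. w ^ t) = (\<Sum>t<d. w ^ Suc t)"
      using sum.atLeast1_atMost_eq[of "\<lambda>t. w ^ t" d] by simp
    also have "\<dots> = w * (\<Sum>t<d. w ^ t)"
      by (simp add: sum_distrib_left)
    also have "\<dots> = (\<Sum>t<d. w ^ t) * w" by (rule mult.commute)
    finally show ?thesis .
  qed
  also have "\<dots> = 0" using geometric_sum[OF w1, of d] wd by simp
  finally show ?thesis using False w_def by simp
qed



lemma root_filter:
  assumes "d \<ge> 1"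
  shows "(\<Sum>t\<in>{1..d}. poly p (zeta d ^ t)) = of_nat d * (\<Sum>j\<in>{j\<in>{..degree p}. d dvd j}. coeff p j)"
proof -
  have "(\<Sum>t\<in>{1..d}. poly p (zeta d ^ t)) = (\<Sum>t\<in>{1..d}. \<Sum>j\<le>degree p. coeff p j * (zeta d ^ j) ^ t)"
    by (simp add: poly_altdef power_mult[symmetric] mult.commute)
  also have "\<dots> = (\<Sum>j\<le>degree p. coeff p j * (\<Sum>t\<in>{1..d}. (zeta d ^ j) ^ t))"
    by (subst sum.swap) (simp add: sum_distrib_left)
  also have "\<dots> = (\<Sum>j\<le>degree p. if d dvd j then of_nat d * coeff p j else 0)"
  proof (intro sum.cong refl)
    fix j
    have "(\<Sum>t\<in>{1..d}. (zeta d ^ j) ^ t) = (if d dvd j then of_nat d else 0)"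
      by (rule root_sum[OF assms])
    then show "coeff p j * (\<Sum>t\<in>{1..d}. (zeta d ^ j) ^ t) = (if d dvd j then of_nat d * coeff p j else 0)"
      by simp
  qed
  also have "\<dots> = (\<Sum>j\<in>{j\<in>{..degree p}. d dvd j}. of_nat d * coeff p j)"
    by (rule sum.inter_filter[symmetric]) simp
  also have "\<dots> = of_nat d * (\<Sum>j\<in>{j\<in>{..degree p}. d dvd j}. coeff p j)"
    by (simp add: sum_distrib_left)
  finally show ?thesis .
qed

lemma root_filter_int:
  assumes "d \<ge> 1" "intp p"
  shows "\<exists>c::int. (\<Sum>t\<in>{1..d}. poly p (zeta d ^ t)) = of_nat d * of_int c"
proof -
  have "(\<Sum>j\<in>{j\<in>{..degree p}. d dvd j}. coeff p j) \<in> \<int>"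
    using assms(2) by (intro Ints_sum) (auto simp: intp_def)
  then obtain c where "(\<Sum>j\<in>{j\<in>{..degree p}. d dvd j}. coeff p j) = of_int c"
    by (auto elim: Ints_cases)
  then show ?thesis using root_filter[OF assms(1), of p] by auto
qed

lemma coprime_prime_power_iff:
  assumes "prime (l::nat)" "N \<ge> 1"
  shows "coprime k (l ^ N) \<longleftrightarrow> \<not> l dvd k"
proof -
  have "coprime k (l ^ N) \<longleftrightarrow> coprime k l" using assms(2) by simp
  also have "\<dots> \<longleftrightarrow> \<not> l dvd k" using assms(1)
    by (metis prime_imp_coprime_nat coprime_commute coprime_absorb_right nat_dvd_1_iff_1 not_prime_1)
  finally show ?thesis .
qed

lemma trace_split:
  fixes g :: "complex \<Rightarrow> complex"
  assumes "prime l" "N \<ge> 1"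
  shows "(\<Sum>k\<in>{k. 1 \<le> k \<and> k \<le> l^N \<and> coprime k (l^N)}. g (zeta (l^N) ^ k))
       = (\<Sum>k\<in>{1..l^N}. g (zeta (l^N) ^ k)) - (\<Sum>t\<in>{1..l^(N-1)}. g (zeta (l^(N-1)) ^ t))"
proof -
  define m where "m = l ^ (N - 1)"
  have l0: "l > 0" using assms prime_gt_0_nat by blast
  have nm: "l ^ N = l * m" unfolding m_def using assms
    by (metis Suc_diff_1 less_le_trans zero_less_one power_Suc)
  have U: "{k. 1 \<le> k \<and> k \<le> l^N \<and> coprime k (l^N)} = {1..l*m} - (\<lambda>t. l*t) ` {1..m}"
  proof -
    have c: "\<And>k. coprime k (l^N) \<longleftrightarrow> \<not> l dvd k" using coprime_prime_power_iff[OF assms] by blast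
    have im: "\<And>k. k \<in> (\<lambda>t. l*t) ` {1..m} \<longleftrightarrow> (l dvd k \<and> 1 \<le> k \<and> k \<le> l*m)"
    proof
      fix k assume "k \<in> (\<lambda>t. l*t) ` {1..m}"
      then show "l dvd k \<and> 1 \<le> k \<and> k \<le> l*m" using l0 by auto
    next
      fix k assume k: "l dvd k \<and> 1 \<le> k \<and> k \<le> l*m"
      then obtain t where t: "k = l * t" by blast
      then have "1 \<le> t" using k by (cases t) auto
      moreover have "t \<le> m" using k t l0 by simp
      ultimately show "k \<in> (\<lambda>t. l*t) ` {1..m}" using t by auto
    qed
    show ?thesis using c im nm by auto
  qed
  have sub: "(\<lambda>t. l*t) ` {1..m} \<subseteq> {1..l*m}" using l0 by auto
  have inj: "inj_on (\<lambda>t. l*t) {1..m}" using l0 by (auto simp: inj_on_def)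
  have "(\<Sum>k\<in>{1..l*m} - (\<lambda>t. l*t) ` {1..m}. g (zeta (l*m) ^ k))
      = (\<Sum>k\<in>{1..l*m}. g (zeta (l*m) ^ k)) - (\<Sum>k\<in>(\<lambda>t. l*t) ` {1..m}. g (zeta (l*m) ^ k))"
    using sum_diff[OF _ sub, of "\<lambda>k. g (zeta (l*m) ^ k)"] by simp
  also have "(\<Sum>k\<in>(\<lambda>t. l*t) ` {1..m}. g (zeta (l*m) ^ k)) = (\<Sum>t\<in>{1..m}. g (zeta (l*m) ^ (l*t)))"
    by (subst sum.reindex[OF inj]) simp
  also have "\<dots> = (\<Sum>t\<in>{1..m}. g (zeta m ^ t))"
    by (simp add: power_mult zeta_mult_pow[OF l0])
  finally show ?thesis using U nm m_def by simp
qed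

lemma phi_root:
  assumes "prime l" "N \<ge> 1" "1 \<le> k" "coprime k (l^N)"
  shows "(\<Sum>i<l. (zeta (l^N) ^ k) ^ (l^(N-1) * i)) = 0"
proof -
  define m where "m = l ^ (N - 1)"
  have l0: "l > 0" using assms prime_gt_0_nat by blast
  have nm: "l ^ N = l * m" unfolding m_def using assms
    by (metis Suc_diff_1 less_le_trans zero_less_one power_Suc)
  have m0: "m > 0" using l0 m_def by simp
  define w where "w = zeta (l^N) ^ (k * m)"
  have n1: "l ^ N \<ge> 1" using l0 by simp
  have "w ^ l = zeta (l^N) ^ (k * l^N)" unfolding w_def nm by (simp add: power_mult[symmetric] mult_ac)
  also have "\<dots> = 1" using zeta_pow_eq_1[OF n1] by simp
  finally have wl: "w ^ l = 1" .
  have w1: "w \<noteq> 1"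
  proof
    assume "w = 1"
    then have "l * m dvd k * m" using zeta_pow_eq_1[OF n1] w_def nm by simp
    then have "l dvd k" using m0 by simp
    then show False using assms coprime_prime_power_iff by blast
  qed
  have "(\<Sum>i<l. (zeta (l^N) ^ k) ^ (l^(N-1) * i)) = (\<Sum>i<l. w ^ i)"
    unfolding w_def m_def by (simp add: power_mult)
  also have "\<dots> = 0" using geometric_sum[OF w1, of l] wl by simp
  finally show ?thesis .
qed



lemma intp_of_int [intro, simp]: "intp (of_int c)"
  by (simp add: of_int_poly intp_const)
lemma intp_of_nat [intro, simp]: "intp (of_nat c)"
  by (simp add: of_nat_poly intp_const)

lemma binom_poly:
  fixes y :: "complex poly"
  shows "(1 - y) ^ k = (\<Sum>j\<le>k. of_int ((-1) ^ j * int (k choose j)) * y ^ j)"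
proof -
  have "(1 - y) ^ k = (- y + 1) ^ k" by simp
  also have "\<dots> = (\<Sum>j\<le>k. of_nat (k choose j) * (- y) ^ j * 1 ^ (k - j))"
    by (rule binomial_ring)
  also have "\<dots> = (\<Sum>j\<le>k. of_int ((-1) ^ j * int (k choose j)) * y ^ j)"
  proof (intro sum.cong refl)
    fix j
    have e1: "(of_int ((-1) ^ j * int (k choose j)) :: complex poly) = (-1) ^ j * of_nat (k choose j)"
      by (simp only: of_int_mult of_int_power of_int_minus of_int_1 of_int_of_nat_eq)
    show "of_nat (k choose j) * (- y) ^ j * 1 ^ (k - j) = of_int ((-1) ^ j * int (k choose j)) * y ^ j"
      unfolding e1 power_minus[of y j] power_one mult_1_right by (simp only: mult_ac)
  qed
  finally show ?thesis .
qed

lemma cong_sum: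
  fixes y :: "complex poly" and l :: int
  assumes "intp y" "\<And>j. j \<in> A \<Longrightarrow> l dvd (c j - d j)"
  shows "\<exists>P. intp P \<and> (\<Sum>j\<in>A. of_int (c j) * y ^ j) = (\<Sum>j\<in>A. of_int (d j) * y ^ j) + of_int l * P"
proof -
  define P where "P = (\<Sum>j\<in>A. of_int ((c j - d j) div l) * y ^ j)"
  have iP: "intp P" unfolding P_def
    by (intro intp_sum intp_mult intp_power intp_of_int assms(1))
  have eq2: "of_int l * P = (\<Sum>j\<in>A. of_int (c j - d j) * y ^ j)"
    unfolding P_def sum_distrib_left
  proof (intro sum.cong refl)
    fix j assume "j \<in> A"
    then have "l * ((c j - d j) div l) = c j - d j" using assms(2) by simp
    then have "(of_int l :: complex poly) * of_int ((c j - d j) div l) = of_int (c j - d j)"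
      by (metis of_int_mult)
    then show "of_int l * (of_int ((c j - d j) div l) * y ^ j) = of_int (c j - d j) * y ^ j"
      by (simp only: mult.assoc[symmetric])
  qed
  have eq3: "(\<Sum>j\<in>A. of_int (d j) * y ^ j) + (\<Sum>j\<in>A. of_int (c j - d j) * y ^ j) = (\<Sum>j\<in>A. of_int (c j) * y ^ j)"
    unfolding sum.distrib[symmetric] by (intro sum.cong refl) (simp add: of_int_diff left_diff_distrib)
  have "(\<Sum>j\<in>A. of_int (c j) * y ^ j) = (\<Sum>j\<in>A. of_int (d j) * y ^ j) + of_int l * P"
    by (simp only: eq2 eq3)
  then show ?thesis using iP by (intro exI[of _ P] conjI)
qed

lemma cong_power:
  fixes p q P :: "complex poly" and l :: int
  assumes "intp p" "intp q" "intp P" "p = q + of_int l * P"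
  shows "\<exists>R. intp R \<and> p ^ k = q ^ k + of_int l * R"
proof (induction k)
  case 0
  then show ?case by (intro exI[of _ 0]) simp
next
  case (Suc k)
  then obtain R where R: "intp R" "p ^ k = q ^ k + of_int l * R" by blast
  have "p ^ Suc k = (q + of_int l * P) * (q ^ k + of_int l * R)" using R assms by simp
  also have "\<dots> = q ^ Suc k + of_int l * (P * q ^ k + q * R + of_int l * P * R)"
    by (simp add: algebra_simps)
  finally have eq: "p ^ Suc k = q ^ Suc k + of_int l * (P * q ^ k + q * R + of_int l * P * R)" .
  have iR: "intp (P * q ^ k + q * R + of_int l * P * R)"
    by (intro intp_add intp_mult intp_power intp_of_int R(1) assms(1-3))
  show ?case by (rule exI, rule conjI[OF iR eq])
qed

lemma l_dvd_choose_pp: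
  assumes "prime (l::nat)" "0 < j" "j < l ^ a"
  shows "l dvd (l ^ a choose j)"
proof (rule ccontr)
  assume nd: "\<not> l dvd (l ^ a choose j)"
  have "j * (l ^ a choose j) = l ^ a * ((l ^ a - 1) choose (j - 1))"
    using times_binomial_minus1_eq[OF assms(2)] by simp
  then have "l ^ a dvd j * (l ^ a choose j)" by simp
  moreover have "coprime (l ^ a) (l ^ a choose j)"
    using nd assms(1) by (simp add: prime_imp_coprime_nat)
  ultimately have "l ^ a dvd j" by (simp add: coprime_dvd_mult_left_iff)
  then show False using assms(2,3) by (simp add: nat_dvd_not_less)
qed

lemma choose_pm1:
  assumes "prime (l::nat)" "j \<le> l - 1"
  shows "int l dvd ((-1) ^ j * int ((l - 1) choose j) - 1)"
  using assms(2)
proof (induction j)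
  case 0
  then show ?case by simp
next
  case (Suc j)
  have l1: "l = Suc (l - 1)" using assms(1) prime_gt_0_nat by simp
  have "(l choose (Suc j)) = ((l - 1) choose j) + ((l - 1) choose (Suc j))"
    by (subst l1) (simp only: binomial_Suc_Suc)
  moreover have "l dvd (l choose (Suc j))"
    using Suc.prems assms(1) by (intro dvd_choose_prime) auto
  ultimately obtain t where t: "int ((l - 1) choose (Suc j)) = int l * int t - int ((l - 1) choose j)"
    by (metis add_diff_cancel_left' dvd_def of_nat_add of_nat_mult add.commute)
  have "(-1) ^ Suc j * int ((l - 1) choose (Suc j)) - 1 = ((-1) ^ j * int ((l - 1) choose j) - 1) - (-1) ^ j * int l * int t"
    unfolding t by (simp add: algebra_simps)
  moreover have "int l dvd ((-1) ^ j * int ((l - 1) choose j) - 1)" using Suc by simp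
  moreover have "int l dvd (-1) ^ j * int l * int t" by simp
  ultimately show ?case by (metis dvd_diff)
qed

lemma split_at_1:
  assumes "intp p"
  shows "\<exists>g. intp g \<and> p = [:poly p 1:] + [:1, -1:] * g"
  using assms
proof (induction p rule: pCons_induct)
  case 0
  then show ?case by (intro exI[of _ 0]) simp
next
  case (pCons a q)
  then have a: "a \<in> \<int>" and q: "intp q" by (auto simp: intp_pCons)
  then obtain g where g: "intp g" "q = [:poly q 1:] + [:1, -1:] * g" using pCons by blast
  have q1: "poly q 1 \<in> \<int>" using q unfolding intp_def poly_altdef by (auto intro!: Ints_sum)
  define g' where "g' = pCons 0 g - [:poly q 1:]"
  have "intp g'" unfolding g'_def using g q1 by (auto simp: intp_pCons)
  moreover have "pCons a q = [:poly (pCons a q) 1:] + [:1, -1:] * g'"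
  proof -
    have "poly (pCons a q) = poly ([:poly (pCons a q) 1:] + [:1, -1:] * g')"
    proof
      fix z
      have hq: "poly q z = poly q 1 + (1 - z) * poly g z"
        by (subst g(2)) (simp add: algebra_simps)
      show "poly (pCons a q) z = poly ([:poly (pCons a q) 1:] + [:1, -1:] * g') z"
        unfolding g'_def by (simp add: hq algebra_simps)
    qed
    then show ?thesis by (simp add: poly_eq_poly_eq_iff)
  qed
  ultimately show ?case by blast
qed



lemma X1_eq: "([:1, -1:] :: complex poly) = 1 - monom 1 1"
  by (simp add: poly_eq_poly_eq_iff[symmetric] poly_monom fun_eq_iff)

lemma X1_pow_m:
  assumes "prime l" "odd l" "N \<ge> 1"
  shows "\<exists>P1. intp P1 \<and> ([:1, -1:] :: complex poly) ^ (l ^ (N - 1)) = 1 - monom 1 (l ^ (N - 1)) + of_int (int l) * P1"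
proof -
  define m where "m = l ^ (N - 1)"
  have l0: "l > 0" using assms prime_gt_0_nat by blast
  have m0: "m \<noteq> 0" using l0 m_def by simp
  have om: "odd m" using assms(2) m_def by simp
  define x :: "complex poly" where "x = monom 1 1"
  define c where "c j = (-1) ^ j * int (m choose j)" for j
  define d :: "nat \<Rightarrow> int" where "d j = (if j = 0 then 1 else 0) - (if j = m then 1 else 0)" for j
  have b: "(1 - x) ^ m = (\<Sum>j\<le>m. of_int (c j) * x ^ j)"
    unfolding c_def by (rule binom_poly)
  have dv: "int l dvd (c j - d j)" if "j \<in> {..m}" for j
  proof -
    have jm: "j \<le> m" using that by simp
    show ?thesis
    proof (cases "j = 0")
      case True then show ?thesis using m0 by (simp add: c_def d_def)
    next
      case False
      show ?thesis
      proof (cases "j = m")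
        case True then show ?thesis using m0 om by (simp add: c_def d_def)
      next
        case False2: False
        then have "l dvd (m choose j)" unfolding m_def using l_dvd_choose_pp[OF assms(1)] jm False m_def by simp
        then have "int l dvd int (m choose j)" by simp
        then show ?thesis using False False2 by (simp add: c_def d_def)
      qed
    qed
  qed
  have ix: "intp x" unfolding x_def by (rule intp_monom) simp
  have ex1: "\<exists>P. intp P \<and> (\<Sum>j\<in>{..m}. of_int (c j) * x ^ j) = (\<Sum>j\<in>{..m}. of_int (d j) * x ^ j) + of_int (int l) * P"
    by (rule cong_sum[OF ix]) (rule dv)
  obtain P where P: "intp P" "(\<Sum>j\<le>m. of_int (c j) * x ^ j) = (\<Sum>j\<le>m. of_int (d j) * x ^ j) + of_int (int l) * P"
    using ex1 by blast
  have "(\<Sum>j\<le>m. of_int (d j) * x ^ j) = (\<Sum>j\<le>m. (if j = 0 then x ^ j else 0) - (if j = m then x ^ j else 0))"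
    by (intro sum.cong refl) (auto simp: d_def m0)
  also have "\<dots> = 1 - x ^ m"
    by (simp add: sum_subtractf)
  finally have "(1 - x) ^ m = 1 - monom 1 m + of_int (int l) * P"
    using b P by (simp add: x_def monom_power)
  then show ?thesis using P(1) X1_eq m_def unfolding x_def by auto
qed

lemma Phi_cong:
  assumes "prime l"
  shows "\<exists>P3. intp P3 \<and> (1 - monom 1 m :: complex poly) ^ (l - 1) = (\<Sum>i<l. monom 1 (m * i)) + of_int (int l) * P3"
proof -
  have l0: "l > 0" using assms prime_gt_0_nat by blast
  define y :: "complex poly" where "y = monom 1 m"
  define c where "c j = (-1) ^ j * int ((l - 1) choose j)" for j
  have b: "(1 - y) ^ (l - 1) = (\<Sum>j\<le>l - 1. of_int (c j) * y ^ j)"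
    unfolding c_def by (rule binom_poly)
  have dv: "int l dvd (c j - (\<lambda>_. 1) j)" if "j \<in> {..l - 1}" for j
    using choose_pm1[OF assms, of j] that unfolding c_def by simp
  have iy: "intp y" unfolding y_def by (rule intp_monom) simp
  have ex1: "\<exists>P. intp P \<and> (\<Sum>j\<in>{..l - 1}. of_int (c j) * y ^ j) = (\<Sum>j\<in>{..l - 1}. of_int ((\<lambda>_. 1) j) * y ^ j) + of_int (int l) * P"
    by (rule cong_sum[OF iy]) (rule dv)
  obtain P where P: "intp P" "(\<Sum>j\<le>l - 1. of_int (c j) * y ^ j) = (\<Sum>j\<le>l - 1. of_int ((\<lambda>_. 1) j) * y ^ j) + of_int (int l) * P"
    using ex1 by blast
  have "(\<Sum>j\<le>l - 1. of_int ((\<lambda>_. 1::int) j) * y ^ j) = (\<Sum>j<l. y ^ j)"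
    using l0 by (simp add: lessThan_Suc_atMost[symmetric])
  also have "\<dots> = (\<Sum>i<l. monom 1 (m * i))"
    unfolding y_def by (simp add: monom_power)
  finally show ?thesis using b P unfolding y_def by auto
qed



lemma alg: fixes x y u c :: int shows "- (x * (u * y)) * (x*y - y + x*y*c) - x * y * (u * y) = x*x*(y*y) * (-(u*(1+c)))"
  by (simp add: algebra_simps)
lemma fixes l K :: nat
  shows T1: "(- int l) ^ Suc K = - (int l * ((-1) ^ K * int l ^ K))"
  and T2: "(- int l) ^ (Suc K - 1) = (-1) ^ K * int l ^ K"
  and T3: "int l ^ (2 * Suc K) = int l * int l * (int l ^ K * int l ^ K)"
  and T4: "int (l ^ Suc K) = int l * int l ^ K"
  and T5: "int l ^ Suc K = int l * int l ^ K"
proof -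
  show "(- int l) ^ Suc K = - (int l * ((-1) ^ K * int l ^ K))"
    by (simp only: power_Suc power_minus[of "int l" K] mult_minus_left)
  show "(- int l) ^ (Suc K - 1) = (-1) ^ K * int l ^ K"
    by (simp only: diff_Suc_1 power_minus[of "int l" K])
  show "int l ^ (2 * Suc K) = int l * int l * (int l ^ K * int l ^ K)"
    by (simp only: mult_2 power_add power_Suc) (simp only: mult_ac)
  show "int (l ^ Suc K) = int l * int l ^ K"
    by (simp only: power_Suc of_nat_mult of_nat_power)
  show "int l ^ Suc K = int l * int l ^ K"
    by (simp only: power_Suc)
qed

theorem mainTheorem9:
  fixes l N :: nat
  assumes "prime l" and "odd l" and "N \<ge> 1"
  shows "\<exists>T::int.
           cyclo_trace (l ^ N) (\<lambda>z. (1 - z) ^ (l ^ (N - 1) * (l * N - N + 1) - 1)) = of_int T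
         \<and> [T = int l ^ N * (- int l) ^ (N - 1)] (mod (int l ^ (2 * N)))"
proof -
  define m where "m = l ^ (N - 1)"
  define n where "n = l ^ N"
  have l2: "l \<ge> 2" using assms(1) prime_ge_2_nat by blast
  have l0: "l > 0" using l2 by simp
  obtain K where K: "N = Suc K" using assms(3) by (cases N) auto
  have nm: "n = l * m" unfolding n_def m_def K by simp
  have m1: "m \<ge> 1" unfolding m_def using l0 by simp
  define e where "e = m * (l - 1)"
  have e0: "e > 0" unfolding e_def using m1 l2 by simp
  have Mexp: "l ^ (N - 1) * (l * N - N + 1) - 1 = e * N + (m - 1)"
  proof -
    have "l * N - N = (l - 1) * N" by (simp add: diff_mult_distrib)
    then have "l ^ (N - 1) * (l * N - N + 1) - 1 = m * ((l - 1) * N + 1) - 1" unfolding m_def by simp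
    also have "\<dots> = m * (l - 1) * N + (m - 1)" using m1 by (simp add: algebra_simps)
    finally show ?thesis unfolding e_def .
  qed
  define X1 :: "complex poly" where "X1 = [:1, -1:]"
  define Phi :: "complex poly" where "Phi = (\<Sum>i<l. monom 1 (m * i))"
  have iX1: "intp X1" unfolding X1_def by (simp add: intp_pCons)
  have iXm: "intp (1 - monom 1 m :: complex poly)" by (intro intp_diff intp_1 intp_monom) simp
  obtain P1 where P1: "intp P1" "X1 ^ m = 1 - monom 1 m + of_int (int l) * P1"
    using X1_pow_m[OF assms] unfolding X1_def m_def by blast
  obtain P3 where P3: "intp P3" "(1 - monom 1 m :: complex poly) ^ (l - 1) = Phi + of_int (int l) * P3"
    using Phi_cong[OF assms(1), of m] unfolding Phi_def by blast
  have exR: "\<exists>R. intp R \<and> (X1 ^ m) ^ (l - 1) = (1 - monom 1 m) ^ (l - 1) + of_int (int l) * R"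
    by (rule cong_power[OF intp_power[OF iX1] iXm P1(1) P1(2)])
  obtain R where R: "intp R" "(X1 ^ m) ^ (l - 1) = (1 - monom 1 m) ^ (l - 1) + of_int (int l) * R"
    using exR by blast
  define H where "H = - (P3 + R)"
  have iH: "intp H" unfolding H_def using P3(1) R(1) by (intro intp_uminus intp_add)
  have XH: "X1 ^ e = Phi - of_int (int l) * H"
  proof -
    have "X1 ^ e = (X1 ^ m) ^ (l - 1)" unfolding e_def by (simp add: power_mult)
    also have "\<dots> = Phi + of_int (int l) * P3 + of_int (int l) * R" using R(2) P3(2) by simp
    also have "\<dots> = Phi - of_int (int l) * H" unfolding H_def by (simp add: algebra_simps)
    finally show ?thesis .
  qed
  have H1: "poly H 1 = 1"
  proof -
    have "poly (X1 ^ e) 1 = 0" using e0 by (simp add: X1_def)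
    moreover have "poly Phi 1 = of_nat l" by (simp add: Phi_def poly_sum poly_monom)
    ultimately have "0 = of_nat l - of_nat l * poly H 1" using XH by simp
    then have "of_nat l * poly H 1 = of_nat l * (1::complex)" by simp
    then show ?thesis using l0 by (simp only: mult_left_cancel of_nat_eq_0_iff)
  qed
  have HN1: "poly (H ^ N) 1 = 1" using H1 by simp
  have exG: "\<exists>g. intp g \<and> H ^ N = [:poly (H ^ N) 1:] + [:1, -1:] * g"
    by (rule split_at_1[OF intp_power[OF iH]])
  obtain G2 where G2: "intp G2" "H ^ N = [:1:] + X1 * G2"
    using exG HN1 unfolding X1_def by auto
  define A where "A = X1 ^ (m - 1)"
  define B where "B = X1 ^ m * G2"
  have pt: "(1 - z) ^ (e * N + (m - 1)) = (- of_nat l) ^ N * (poly A z + poly B z)"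
    if z: "poly Phi z = 0" for z
  proof -
    have px: "poly X1 z = 1 - z" by (simp add: X1_def)
    have ze: "(1 - z) ^ e = - of_nat l * poly H z"
      using arg_cong[OF XH, of "\<lambda>p. poly p z"] z px by simp
    have hn: "poly H z ^ N = 1 + (1 - z) * poly G2 z"
      using arg_cong[OF G2(2), of "\<lambda>p. poly p z"] px by simp
    have mm: "(1 - z) * (1 - z) ^ (m - 1) = (1 - z) ^ m"
      using m1 by (metis Suc_diff_1 less_le_trans zero_less_one power_Suc)
    have "(1 - z) ^ (e * N + (m - 1)) = ((1 - z) ^ e) ^ N * (1 - z) ^ (m - 1)"
      by (simp only: power_add power_mult)
    also have "\<dots> = (- of_nat l) ^ N * poly H z ^ N * (1 - z) ^ (m - 1)"
      unfolding ze by (simp only: power_mult_distrib)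
    also have "\<dots> = (- of_nat l) ^ N * ((1 - z) ^ (m - 1) + (1 - z) * (1 - z) ^ (m - 1) * poly G2 z)"
      unfolding hn by (simp add: algebra_simps)
    also have "\<dots> = (- of_nat l) ^ N * (poly A z + poly B z)"
      unfolding mm A_def B_def by (simp add: px)
    finally show ?thesis .
  qed
  define U where "U = {k. 1 \<le> k \<and> k \<le> n \<and> coprime k n}"
  have roots: "poly Phi (zeta n ^ k) = 0" if "k \<in> U" for k
  proof -
    have "poly Phi (zeta n ^ k) = (\<Sum>i<l. (zeta (l ^ N) ^ k) ^ (l ^ (N - 1) * i))"
      unfolding Phi_def n_def m_def by (simp add: poly_sum poly_monom)
    also have "\<dots> = 0" using phi_root[OF assms(1,3)] that unfolding U_def n_def by blast
    finally show ?thesis .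
  qed
  define Tr where "Tr p = (\<Sum>k\<in>U. poly p (zeta n ^ k))" for p
  have Trsplit: "Tr p = (\<Sum>k\<in>{1..n}. poly p (zeta n ^ k)) - (\<Sum>t\<in>{1..m}. poly p (zeta m ^ t))" for p
    unfolding Tr_def U_def n_def m_def by (rule trace_split[OF assms(1,3)])
  have trace: "cyclo_trace (l ^ N) (\<lambda>z. (1 - z) ^ (l ^ (N - 1) * (l * N - N + 1) - 1))
      = (- of_nat l) ^ N * (Tr A + Tr B)"
  proof -
    have "cyclo_trace (l ^ N) (\<lambda>z. (1 - z) ^ (l ^ (N - 1) * (l * N - N + 1) - 1))
        = (\<Sum>k\<in>U. (- of_nat l) ^ N * (poly A (zeta n ^ k) + poly B (zeta n ^ k)))"
      unfolding cyclo_trace_def Mexp n_def[symmetric] U_def[symmetric]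
      by (intro sum.cong refl pt roots)
    also have "\<dots> = (- of_nat l) ^ N * (Tr A + Tr B)"
      unfolding Tr_def by (simp only: sum_distrib_left[symmetric] sum.distrib)
    finally show ?thesis .
  qed
  have SA: "(\<Sum>t\<in>{1..d}. poly A (zeta d ^ t)) = of_nat d" if dm: "d \<ge> m" for d
  proof -
    have d1: "d \<ge> 1" using that m1 by simp
    have degA: "degree A \<le> m - 1"
      unfolding A_def using degree_power_le[of X1 "m - 1"] by (simp add: X1_def)
    have set0: "{j\<in>{..degree A}. d dvd j} = {0}"
    proof -
      have z: "j = 0" if j: "j \<le> degree A" "d dvd j" for j
      proof (rule ccontr)
        assume "j \<noteq> 0"
        then have "d \<le> j" using j(2) by (simp add: dvd_imp_le)
        moreover have "j < m" using j(1) degA m1 by linarith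
        ultimately show False using dm by linarith
      qed
      show ?thesis using z by auto
    qed
    have c0: "coeff A 0 = 1" unfolding A_def by (simp add: coeff_0_power X1_def)
    show ?thesis using root_filter[OF d1, of A] set0 c0 by simp
  qed
  have TrA: "Tr A = of_nat n - of_nat m"
    using Trsplit[of A] SA[of n] SA[of m] nm l0 by simp
  have iB: "intp B" unfolding B_def using iX1 G2(1) by (intro intp_mult intp_power)
  obtain a where a: "(\<Sum>k\<in>{1..n}. poly B (zeta n ^ k)) = of_nat n * of_int a"
    using root_filter_int[OF _ iB, of n] nm m1 l0 by auto
  have iPG: "intp (P1 * G2)" using P1(1) G2(1) by (intro intp_mult)
  obtain b where b: "(\<Sum>t\<in>{1..m}. poly (P1 * G2) (zeta m ^ t)) = of_nat m * of_int b"
    using root_filter_int[OF m1 iPG] by auto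
  have SB: "(\<Sum>t\<in>{1..m}. poly B (zeta m ^ t)) = of_nat l * (of_nat m * of_int b)"
  proof -
    have "poly B (zeta m ^ t) = of_nat l * poly (P1 * G2) (zeta m ^ t)" for t
    proof -
      have "(zeta m ^ t) ^ m = (zeta m ^ m) ^ t" by (simp add: power_mult[symmetric] mult.commute)
      also have "zeta m ^ m = 1" using zeta_pow_eq_1[OF m1] by simp
      finally have w: "(zeta m ^ t) ^ m = 1" by simp
      show ?thesis unfolding B_def using arg_cong[OF P1(2), of "\<lambda>p. poly p (zeta m ^ t)"] w
        by (simp add: poly_monom)
    qed
    then have "(\<Sum>t\<in>{1..m}. poly B (zeta m ^ t)) = of_nat l * (\<Sum>t\<in>{1..m}. poly (P1 * G2) (zeta m ^ t))"
      by (simp add: sum_distrib_left)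
    then show ?thesis using b by simp
  qed
  define T :: int where "T = (- int l) ^ N * (int n - int m + int n * (a - b))"
  have lmn: "of_nat l * (of_nat m * of_int b) = (of_nat n * of_int b :: complex)" using nm by simp
  have TrB: "Tr B = of_nat n * of_int a - of_nat n * of_int b"
    using Trsplit[of B] a SB lmn by simp
  have oi: "(of_int (int n - int m + int n * (a - b)) :: complex) = of_nat n - of_nat m + (of_nat n * of_int a - of_nat n * of_int b)"
    by (simp add: right_diff_distrib)
  have "Tr A + Tr B = of_int (int n - int m + int n * (a - b))"
    unfolding oi TrA TrB by simp
  then have tr: "cyclo_trace (l ^ N) (\<lambda>z. (1 - z) ^ (l ^ (N - 1) * (l * N - N + 1) - 1)) = of_int T"
    unfolding trace T_def by simp
  have cong: "[T = int l ^ N * (- int l) ^ (N - 1)] (mod (int l ^ (2 * N)))"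
  proof -
    have e1: "T = - (int l * ((-1) ^ K * int l ^ K)) * (int l * int l ^ K - int l ^ K + int l * int l ^ K * (a - b))"
      unfolding T_def n_def m_def K by (simp only: of_nat_power T5 T1 diff_Suc_1)
    have e2: "int l ^ N * (- int l) ^ (N - 1) = int l * int l ^ K * ((-1) ^ K * int l ^ K)"
      unfolding K by (simp only: T5 T2)
    have e3: "int l ^ (2 * N) = int l * int l * (int l ^ K * int l ^ K)"
      unfolding K by (rule T3)
    have "T - int l ^ N * (- int l) ^ (N - 1) = int l ^ (2 * N) * (- ((-1) ^ K * (1 + (a - b))))"
      unfolding e1 e2 e3 by (rule alg)
    then show ?thesis unfolding cong_iff_dvd_diff by (simp only:) (rule dvd_triv_left)
  qed
  show ?thesis by (intro exI[of _ T] conjI tr cong)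
qed

end
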